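(* There are strictly more first-order-expressible node properties expressible in $\mathsf{inf}\text{-}\mathrm{C}^2$ than properties expressible in $\mathrm{C}^2$: every property expressible in $\mathrm{C}^2$ is expressible both in first-order logic and in $\mathsf{inf}\text{-}\mathrm{C}^2$, but there is a property expressible both in first-order logic and in $\mathsf{inf}\text{-}\mathrm{C}^2$ that is not expressible in $\mathrm{C}^2$. This holds both over directed graphs and over undirected graphs.
   Context: A directed graph of dimension $d$ is $G=(V,E,\lambda)$ with $V$ finite, $E\subseteq V\times V$ without loops, $\lambda:V\to\{0,1\}^d$, viewed as a first-order structure with relation $E$ and unary predicates $P_i=\{v:\lambda(v)_i=1\}$; undirected graphs are those with symmetric $E$. A (node) property assigns a truth value to each node of each graph and is expressible in a logic if some formula $\varphi(x)$ of that logic with one free variable satisfies: $G\models\varphi(v)$ iff the property holds at $v$ in $G$, for all graphs $G$ (of the class considered) and nodes $v$. $\mathrm{C}^2$ is the fragment of first-order logic with equality using only the two variables $x,y$ but allowing counting quantifiers $\exists_k$ for every $k\in\mathbb{N}$ ("there exist at least $k$ distinct elements such that"). $\mathsf{inf}\text{-}\mathrm{C}^2$ is the extension of $\mathrm{C}^2$ allowing infinitary conjunctions and disjunctions (still using only the variables $x,y$). *)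

theory Defs
  imports Main
begin

section \<open>Labelled graphs (vertices drawn from nat, which covers all finite graphs up to isomorphism)\<close>

record graph =
  verts :: "nat set"
  arcs  :: "(nat \<times> nat) set"
  lab   :: "nat \<Rightarrow> bool list"

definition is_graph :: "nat \<Rightarrow> graph \<Rightarrow> bool" where
  "is_graph d G \<longleftrightarrow> finite (verts G) \<and> arcs G \<subseteq> verts G \<times> verts G
     \<and> (\<forall>v. (v, v) \<notin> arcs G) \<and> (\<forall>v\<in>verts G. length (lab G v) = d)"

definition is_ugraph :: "nat \<Rightarrow> graph \<Rightarrow> bool" where
  "is_ugraph d G \<longleftrightarrow> is_graph d G \<and> sym (arcs G)"

text \<open>Unary predicate P_i (0-based index i): the i-th label bit is 1.\<close>
definition hasP :: "graph \<Rightarrow> nat \<Rightarrow> nat \<Rightarrow> bool" where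
  "hasP G i v \<longleftrightarrow> i < length (lab G v) \<and> lab G v ! i"

datatype fo = FEq nat nat | FEdge nat nat | FPred nat nat | FNeg fo | FAnd fo fo | FEx nat fo

primrec fo_fv :: "fo \<Rightarrow> nat set" where
  "fo_fv (FEq i j) = {i, j}"
| "fo_fv (FEdge i j) = {i, j}"
| "fo_fv (FPred k i) = {i}"
| "fo_fv (FNeg \<phi>) = fo_fv \<phi>"
| "fo_fv (FAnd \<phi> \<psi>) = fo_fv \<phi> \<union> fo_fv \<psi>"
| "fo_fv (FEx i \<phi>) = fo_fv \<phi> - {i}"

primrec fo_sat :: "graph \<Rightarrow> (nat \<Rightarrow> nat) \<Rightarrow> fo \<Rightarrow> bool" where
  "fo_sat G a (FEq i j) = (a i = a j)"
| "fo_sat G a (FEdge i j) = ((a i, a j) \<in> arcs G)"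
| "fo_sat G a (FPred k i) = hasP G k (a i)"
| "fo_sat G a (FNeg \<phi>) = (\<not> fo_sat G a \<phi>)"
| "fo_sat G a (FAnd \<phi> \<psi>) = (fo_sat G a \<phi> \<and> fo_sat G a \<psi>)"
| "fo_sat G a (FEx i \<phi>) = (\<exists>w\<in>verts G. fo_sat G (a(i := w)) \<phi>)"

datatype var2 = VX | VY

datatype c2 = CEq var2 var2 | CEdge var2 var2 | CPred nat var2 | CNeg c2 | CAnd c2 c2
  | CExc nat var2 c2

primrec c2_fv :: "c2 \<Rightarrow> var2 set" where
  "c2_fv (CEq z w) = {z, w}"
| "c2_fv (CEdge z w) = {z, w}"
| "c2_fv (CPred k z) = {z}"
| "c2_fv (CNeg \<phi>) = c2_fv \<phi>"
| "c2_fv (CAnd \<phi> \<psi>) = c2_fv \<phi> \<union> c2_fv \<psi>"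
| "c2_fv (CExc k z \<phi>) = c2_fv \<phi> - {z}"

primrec c2_sat :: "graph \<Rightarrow> (var2 \<Rightarrow> nat) \<Rightarrow> c2 \<Rightarrow> bool" where
  "c2_sat G a (CEq z w) = (a z = a w)"
| "c2_sat G a (CEdge z w) = ((a z, a w) \<in> arcs G)"
| "c2_sat G a (CPred k z) = hasP G k (a z)"
| "c2_sat G a (CNeg \<phi>) = (\<not> c2_sat G a \<phi>)"
| "c2_sat G a (CAnd \<phi> \<psi>) = (c2_sat G a \<phi> \<and> c2_sat G a \<psi>)"
| "c2_sat G a (CExc k z \<phi>) = (k \<le> card {w \<in> verts G. c2_sat G (a(z := w)) \<phi>})"

datatype ic2 = IEq var2 var2 | IEdge var2 var2 | IPred nat var2 | INeg ic2 | IAnd ic2 ic2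
  | IBigAnd "nat \<Rightarrow> ic2" | IBigOr "nat \<Rightarrow> ic2"
  | IExc nat var2 ic2

primrec ic2_fv :: "ic2 \<Rightarrow> var2 set" where
  "ic2_fv (IEq z w) = {z, w}"
| "ic2_fv (IEdge z w) = {z, w}"
| "ic2_fv (IPred k z) = {z}"
| "ic2_fv (INeg \<phi>) = ic2_fv \<phi>"
| "ic2_fv (IAnd \<phi> \<psi>) = ic2_fv \<phi> \<union> ic2_fv \<psi>"
| "ic2_fv (IBigAnd f) = (\<Union>i. ic2_fv (f i))"
| "ic2_fv (IBigOr f) = (\<Union>i. ic2_fv (f i))"
| "ic2_fv (IExc k z \<phi>) = ic2_fv \<phi> - {z}"

primrec ic2_sat :: "graph \<Rightarrow> (var2 \<Rightarrow> nat) \<Rightarrow> ic2 \<Rightarrow> bool" where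
  "ic2_sat G a (IEq z w) = (a z = a w)"
| "ic2_sat G a (IEdge z w) = ((a z, a w) \<in> arcs G)"
| "ic2_sat G a (IPred k z) = hasP G k (a z)"
| "ic2_sat G a (INeg \<phi>) = (\<not> ic2_sat G a \<phi>)"
| "ic2_sat G a (IAnd \<phi> \<psi>) = (ic2_sat G a \<phi> \<and> ic2_sat G a \<psi>)"
| "ic2_sat G a (IBigAnd f) = (\<forall>i. ic2_sat G a (f i))"
| "ic2_sat G a (IBigOr f) = (\<exists>i. ic2_sat G a (f i))"
| "ic2_sat G a (IExc k z \<phi>) = (k \<le> card {w \<in> verts G. ic2_sat G (a(z := w)) \<phi>})"

text \<open>A node property is a function P :: graph => nat => bool (only its values at
  nodes v of graphs G in the class matter).
  The assignment maps every variable to v; only x is free, so this is G |= phi(v).\<close>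

definition fo_expressible :: "(graph \<Rightarrow> bool) \<Rightarrow> (graph \<Rightarrow> nat \<Rightarrow> bool) \<Rightarrow> bool" where
  "fo_expressible C P \<longleftrightarrow> (\<exists>\<phi>. fo_fv \<phi> \<subseteq> {0} \<and>
     (\<forall>G v. C G \<and> v \<in> verts G \<longrightarrow> (fo_sat G (\<lambda>_. v) \<phi> \<longleftrightarrow> P G v)))"

definition c2_expressible :: "(graph \<Rightarrow> bool) \<Rightarrow> (graph \<Rightarrow> nat \<Rightarrow> bool) \<Rightarrow> bool" where
  "c2_expressible C P \<longleftrightarrow> (\<exists>\<phi>. c2_fv \<phi> \<subseteq> {VX} \<and>
     (\<forall>G v. C G \<and> v \<in> verts G \<longrightarrow> (c2_sat G (\<lambda>_. v) \<phi> \<longleftrightarrow> P G v)))"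

definition ic2_expressible :: "(graph \<Rightarrow> bool) \<Rightarrow> (graph \<Rightarrow> nat \<Rightarrow> bool) \<Rightarrow> bool" where
  "ic2_expressible C P \<longleftrightarrow> (\<exists>\<phi>. ic2_fv \<phi> \<subseteq> {VX} \<and>
     (\<forall>G v. C G \<and> v \<in> verts G \<longrightarrow> (ic2_sat G (\<lambda>_. v) \<phi> \<longleftrightarrow> P G v)))"

end

theory Submission
  imports Defs
begin

primrec c2i :: "c2 \<Rightarrow> ic2" where
  "c2i (CEq z w) = IEq z w"
| "c2i (CEdge z w) = IEdge z w"
| "c2i (CPred k z) = IPred k z"
| "c2i (CNeg \<phi>) = INeg (c2i \<phi>)"
| "c2i (CAnd \<phi> \<psi>) = IAnd (c2i \<phi>) (c2i \<psi>)"
| "c2i (CExc k z \<phi>) = IExc k z (c2i \<phi>)"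

lemma c2i_fv: "ic2_fv (c2i \<phi>) = c2_fv \<phi>"
  by (induction \<phi>) auto

lemma c2i_sat: "ic2_sat G a (c2i \<phi>) = c2_sat G a \<phi>"
  by (induction \<phi> arbitrary: a) auto

definition FTrue :: fo where "FTrue = FEq 0 0"

definition neqs :: "nat \<Rightarrow> nat list \<Rightarrow> fo" where
  "neqs j xs = foldr (\<lambda>i f. FAnd (FNeg (FEq j i)) f) xs FTrue"

lemma neqs_sat: "fo_sat G b (neqs j xs) \<longleftrightarrow> (\<forall>i\<in>set xs. b j \<noteq> b i)"
  by (induction xs) (auto simp: neqs_def FTrue_def)

lemma neqs_fv: "fo_fv (neqs j xs) \<subseteq> {0, j} \<union> set xs"
  by (induction xs) (auto simp: neqs_def FTrue_def)

fun chain :: "(nat \<Rightarrow> fo) \<Rightarrow> nat \<Rightarrow> nat \<Rightarrow> nat \<Rightarrow> fo" where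
  "chain \<psi> n 0 j = FTrue"
| "chain \<psi> n (Suc m) j = FEx j (FAnd (neqs j [n..<j]) (FAnd (\<psi> j) (chain \<psi> n m (Suc j))))"

primrec tr :: "(var2 \<Rightarrow> nat) \<Rightarrow> nat \<Rightarrow> c2 \<Rightarrow> fo" where
  "tr \<rho> n (CEq z w) = FEq (\<rho> z) (\<rho> w)"
| "tr \<rho> n (CEdge z w) = FEdge (\<rho> z) (\<rho> w)"
| "tr \<rho> n (CPred k z) = FPred k (\<rho> z)"
| "tr \<rho> n (CNeg \<phi>) = FNeg (tr \<rho> n \<phi>)"
| "tr \<rho> n (CAnd \<phi> \<psi>) = FAnd (tr \<rho> n \<phi>) (tr \<rho> n \<psi>)"
| "tr \<rho> n (CExc k z \<phi>) = chain (\<lambda>j. tr (\<rho>(z := j)) (n + k) \<phi>) n k n"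

lemma chain_fv: "fo_fv (chain \<psi> n m j) \<subseteq> {0} \<union> {n..<j} \<union> (\<Union>i\<in>{j..<j+m}. fo_fv (\<psi> i) - {i})"
proof (induction m arbitrary: j)
  case 0
  then show ?case by (simp add: FTrue_def)
next
  case (Suc m)
  have 1: "fo_fv (neqs j [n..<j]) - {j} \<subseteq> {0} \<union> {n..<j}" using neqs_fv[of j "[n..<j]"] by auto
  have 2: "fo_fv (chain \<psi> n m (Suc j)) - {j} \<subseteq> {0} \<union> {n..<j} \<union> (\<Union>i\<in>{j..<j+Suc m}. fo_fv (\<psi> i) - {i})"
    using Suc[of "Suc j"] by (auto simp: less_Suc_eq)
  show ?case using 1 2 by auto
qed

lemma tr_fv: "fo_fv (tr \<rho> n \<phi>) \<subseteq> \<rho> ` c2_fv \<phi> \<union> {0}"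
proof (induction \<phi> arbitrary: \<rho> n)
  case (CExc k z \<phi>)
  have "fo_fv (tr (\<rho>(z := i)) (n + k) \<phi>) - {i} \<subseteq> \<rho> ` (c2_fv \<phi> - {z}) \<union> {0}" for i
  proof -
    have a: "(\<rho>(z:=i)) ` c2_fv \<phi> \<subseteq> insert i (\<rho> ` (c2_fv \<phi> - {z}))" by auto
    have "fo_fv (tr (\<rho>(z := i)) (n + k) \<phi>) \<subseteq> insert i (\<rho> ` (c2_fv \<phi> - {z})) \<union> {0}"
      using CExc[of "\<rho>(z := i)" "n+k"] a by blast
    then show ?thesis by blast
  qed
  then have "(\<Union>i\<in>{n..<n+k}. fo_fv (tr (\<rho>(z := i)) (n + k) \<phi>) - {i}) \<subseteq> \<rho> ` (c2_fv \<phi> - {z}) \<union> {0}"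
    by blast
  moreover have "fo_fv (chain (\<lambda>j. tr (\<rho>(z := j)) (n + k) \<phi>) n k n) \<subseteq> {0} \<union> (\<Union>i\<in>{n..<n+k}. fo_fv (tr (\<rho>(z := i)) (n + k) \<phi>) - {i})"
    using chain_fv[of "\<lambda>j. tr (\<rho>(z := j)) (n + k) \<phi>" n k n] by simp
  ultimately show ?case by simp blast
qed (simp; blast)+

lemma img_upd: "n \<le> j \<Longrightarrow> (b(j:=w)) ` {n..<Suc j} = insert w (b ` {n..<j})"
proof -
  assume "n \<le> j"
  then have "{n..<Suc j} = insert j {n..<j}" by auto
  moreover have "(b(j:=w)) ` {n..<j} = b ` {n..<j}" by (rule image_cong) auto
  ultimately show ?thesis by (metis image_insert fun_upd_same)
qed

lemma chain_sat:
  assumes fin: "finite (verts G)"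
    and H: "\<And>b j. (\<forall>i<n. b i = bb i) \<Longrightarrow> n \<le> j \<Longrightarrow> j < n + kk \<Longrightarrow> fo_sat G b (\<psi> j) \<longleftrightarrow> Q (b j)"
  shows "(\<forall>i<n. b i = bb i) \<Longrightarrow> n \<le> j \<Longrightarrow> j + m \<le> n + kk \<Longrightarrow>
    fo_sat G b (chain \<psi> n m j) \<longleftrightarrow> (\<exists>A. A \<subseteq> {w\<in>verts G. Q w} - b ` {n..<j} \<and> card A = m \<and> finite A)"
proof (induction m arbitrary: j b)
  case 0
  then show ?case by (auto simp: FTrue_def)
next
  case (Suc m)
  let ?S = "{w\<in>verts G. Q w}"
  have "fo_sat G b (chain \<psi> n (Suc m) j) \<longleftrightarrow>
     (\<exists>w\<in>verts G. w \<notin> b ` {n..<j} \<and> Q w \<and> (\<exists>A. A \<subseteq> ?S - (b(j:=w)) ` {n..<Suc j} \<and> card A = m \<and> finite A))"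
  proof -
    have e1: "fo_sat G (b(j:=w)) (neqs j [n..<j]) \<longleftrightarrow> w \<notin> b ` {n..<j}" for w
      by (auto simp: neqs_sat)
    have a1: "\<forall>i<n. (b(j:=w)) i = bb i" for w using Suc.prems(1,2) by auto
    have a2: "j < n + kk" using Suc.prems(3) by simp
    have a3: "n \<le> Suc j" using Suc.prems(2) by simp
    have a4: "Suc j + m \<le> n + kk" using Suc.prems(3) by simp
    have e2: "fo_sat G (b(j:=w)) (\<psi> j) \<longleftrightarrow> Q w" for w
      using H[OF a1[of w] Suc.prems(2) a2] by (simp only: fun_upd_same)
    have e3: "fo_sat G (b(j:=w)) (chain \<psi> n m (Suc j)) \<longleftrightarrow> (\<exists>A. A \<subseteq> ?S - (b(j:=w)) ` {n..<Suc j} \<and> card A = m \<and> finite A)" for w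
      using Suc.IH[OF a1 a3 a4] .
    show ?thesis by (simp only: chain.simps fo_sat.simps e1 e2 e3)
  qed
  also have "\<dots> \<longleftrightarrow> (\<exists>A. A \<subseteq> ?S - b ` {n..<j} \<and> card A = Suc m \<and> finite A)"
  proof
    assume "\<exists>w\<in>verts G. w \<notin> b ` {n..<j} \<and> Q w \<and> (\<exists>A. A \<subseteq> ?S - (b(j:=w)) ` {n..<Suc j} \<and> card A = m \<and> finite A)"
    then obtain w where w: "w \<in> verts G" "w \<notin> b ` {n..<j}" "Q w" and "\<exists>A. A \<subseteq> ?S - (b(j:=w)) ` {n..<Suc j} \<and> card A = m \<and> finite A"
      by (elim bexE conjE)
    then obtain A where A: "A \<subseteq> ?S - (b(j:=w)) ` {n..<Suc j}" "card A = m" "finite A"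
      by (elim exE conjE)
    have img: "(b(j:=w)) ` {n..<Suc j} = insert w (b ` {n..<j})"
      by (rule img_upd[OF Suc.prems(2)])
    have i1: "insert w A \<subseteq> ?S - b ` {n..<j}" using A(1) w img by blast
    have "w \<notin> A" using A(1) img by blast
    then have "card (insert w A) = Suc m" using A by simp
    then show "\<exists>A. A \<subseteq> ?S - b ` {n..<j} \<and> card A = Suc m \<and> finite A"
      using i1 A(3) by blast
  next
    assume "\<exists>A. A \<subseteq> ?S - b ` {n..<j} \<and> card A = Suc m \<and> finite A"
    then obtain A where A: "A \<subseteq> ?S - b ` {n..<j}" "card A = Suc m" "finite A" by (elim exE conjE)
    have "A \<noteq> {}" using A(2) by auto
    then obtain w where w: "w \<in> A" by blast
    have img: "(b(j:=w)) ` {n..<Suc j} = insert w (b ` {n..<j})"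
      by (rule img_upd[OF Suc.prems(2)])
    have "A - {w} \<subseteq> ?S - (b(j:=w)) ` {n..<Suc j}" using A(1) img by blast
    moreover have "card (A - {w}) = m" using A w by simp
    moreover have "finite (A - {w})" using A by simp
    moreover have "w \<in> verts G" "w \<notin> b ` {n..<j}" "Q w" using A(1) w by blast+
    ultimately show "\<exists>w\<in>verts G. w \<notin> b ` {n..<j} \<and> Q w \<and> (\<exists>A. A \<subseteq> ?S - (b(j:=w)) ` {n..<Suc j} \<and> card A = m \<and> finite A)"
      by blast
  qed
  finally show ?case .
qed

lemma ex_subset_card:
  assumes "finite S"
  shows "(\<exists>A. A \<subseteq> S \<and> card A = k \<and> finite A) \<longleftrightarrow> k \<le> card S"
proof
  assume "\<exists>A. A \<subseteq> S \<and> card A = k \<and> finite A"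
  then obtain A where "A \<subseteq> S" "card A = k" by blast
  then show "k \<le> card S" using card_mono[OF assms] by blast
next
  assume "k \<le> card S"
  then obtain A where "A \<subseteq> S" "card A = k" using obtain_subset_with_card_n by blast
  then show "\<exists>A. A \<subseteq> S \<and> card A = k \<and> finite A" using assms finite_subset by blast
qed

lemma tr_sat:
  assumes fin: "finite (verts G)"
  shows "(\<forall>z. \<rho> z < n) \<Longrightarrow> fo_sat G b (tr \<rho> n \<phi>) \<longleftrightarrow> c2_sat G (b \<circ> \<rho>) \<phi>"
proof (induction \<phi> arbitrary: \<rho> n b)
  case (CExc k z \<phi>)
  let ?Q = "\<lambda>w. c2_sat G ((b \<circ> \<rho>)(z := w)) \<phi>"
  have H: "fo_sat G b' (tr (\<rho>(z := j)) (n + k) \<phi>) \<longleftrightarrow> ?Q (b' j)"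
    if "\<forall>i<n. b' i = b i" "n \<le> j" "j < n + k" for b' j
  proof -
    have lt: "\<forall>z'. (\<rho>(z := j)) z' < n + k"
    proof
      fix z' show "(\<rho>(z := j)) z' < n + k"
      proof -
        have "\<rho> z' < n" using CExc.prems by blast
        then show ?thesis using that(3) by (cases "z' = z") auto
      qed
    qed
    have "fo_sat G b' (tr (\<rho>(z := j)) (n + k) \<phi>) \<longleftrightarrow> c2_sat G (b' \<circ> \<rho>(z := j)) \<phi>"
      by (rule CExc.IH[OF lt])
    also have "b' \<circ> \<rho>(z := j) = (b \<circ> \<rho>)(z := b' j)"
      using that CExc.prems by (auto simp: fun_eq_iff)
    finally show ?thesis .
  qed
  have C: "fo_sat G b (chain (\<lambda>j. tr (\<rho>(z := j)) (n + k) \<phi>) n k n) \<longleftrightarrow> (\<exists>A. A \<subseteq> {w\<in>verts G. ?Q w} - b ` {n..<n} \<and> card A = k \<and> finite A)"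
    by (rule chain_sat[where bb=b and kk=k, OF fin H]) simp_all
  have "fo_sat G b (tr \<rho> n (CExc k z \<phi>)) \<longleftrightarrow> (\<exists>A. A \<subseteq> {w\<in>verts G. ?Q w} - b ` {n..<n} \<and> card A = k \<and> finite A)"
    using C by (simp only: tr.simps)
  also have "\<dots> \<longleftrightarrow> k \<le> card {w\<in>verts G. ?Q w}"
    using ex_subset_card[of "{w\<in>verts G. ?Q w}" k] fin by simp
  finally show ?case by (simp only: c2_sat.simps)
qed auto

definition nA :: "graph \<Rightarrow> nat \<Rightarrow> nat \<Rightarrow> bool" where
  "nA G u w \<longleftrightarrow> (\<forall>t\<in>verts G. (u,t) \<in> arcs G \<and> t \<noteq> w \<longrightarrow> (w,t) \<in> arcs G)"

definition PP :: "graph \<Rightarrow> nat \<Rightarrow> bool" where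
  "PP G v \<longleftrightarrow> sym (arcs G) \<and> (\<forall>u\<in>verts G. \<forall>w\<in>verts G. nA G u w \<or> nA G w u)"

definition FAll :: "nat \<Rightarrow> fo \<Rightarrow> fo" where "FAll i \<phi> = FNeg (FEx i (FNeg \<phi>))"
definition FImp :: "fo \<Rightarrow> fo \<Rightarrow> fo" where "FImp p q = FNeg (FAnd p (FNeg q))"
definition FOr :: "fo \<Rightarrow> fo \<Rightarrow> fo" where "FOr p q = FNeg (FAnd (FNeg p) (FNeg q))"

lemma FAll_sat[simp]: "fo_sat G a (FAll i \<phi>) \<longleftrightarrow> (\<forall>w\<in>verts G. fo_sat G (a(i:=w)) \<phi>)"
  by (simp add: FAll_def)
lemma FImp_sat[simp]: "fo_sat G a (FImp p q) \<longleftrightarrow> (fo_sat G a p \<longrightarrow> fo_sat G a q)"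
  by (simp add: FImp_def)
lemma FOr_sat[simp]: "fo_sat G a (FOr p q) \<longleftrightarrow> (fo_sat G a p \<or> fo_sat G a q)"
  by (simp add: FOr_def)
lemma FAll_fv[simp]: "fo_fv (FAll i \<phi>) = fo_fv \<phi> - {i}" by (simp add: FAll_def)
lemma FImp_fv[simp]: "fo_fv (FImp p q) = fo_fv p \<union> fo_fv q" by (simp add: FImp_def)
lemma FOr_fv[simp]: "fo_fv (FOr p q) = fo_fv p \<union> fo_fv q" by (simp add: FOr_def)

definition foA :: "nat \<Rightarrow> nat \<Rightarrow> fo" where
  "foA u w = FAll 3 (FImp (FAnd (FEdge u 3) (FNeg (FEq 3 w))) (FEdge w 3))"

definition foP :: fo where
  "foP = FAnd (FAll 1 (FAll 2 (FImp (FEdge 1 2) (FEdge 2 1)))) (FAll 1 (FAll 2 (FOr (foA 1 2) (foA 2 1))))"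

lemma foP_fv: "fo_fv foP = {}"
  by (auto simp: foP_def foA_def)

lemma foP_sat: "fo_sat G a foP \<longleftrightarrow> (\<forall>x\<in>verts G. \<forall>y\<in>verts G. (x,y) \<in> arcs G \<longrightarrow> (y,x) \<in> arcs G)
   \<and> (\<forall>x\<in>verts G. \<forall>y\<in>verts G. nA G x y \<or> nA G y x)"
  by (simp add: foP_def foA_def nA_def)

lemma foP_correct:
  assumes "is_graph d G"
  shows "fo_sat G a foP \<longleftrightarrow> PP G v"
proof -
  have sub: "arcs G \<subseteq> verts G \<times> verts G" using assms by (simp add: is_graph_def)
  have "(\<forall>x\<in>verts G. \<forall>y\<in>verts G. (x,y) \<in> arcs G \<longrightarrow> (y,x) \<in> arcs G) \<longleftrightarrow> sym (arcs G)"
    using sub unfolding sym_def by blast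
  then show ?thesis by (simp add: foP_sat PP_def)
qed

definition IAll :: "var2 \<Rightarrow> ic2 \<Rightarrow> ic2" where "IAll z \<phi> = INeg (IExc 1 z (INeg \<phi>))"
definition IImp :: "ic2 \<Rightarrow> ic2 \<Rightarrow> ic2" where "IImp p q = INeg (IAnd p (INeg q))"
definition IIff :: "ic2 \<Rightarrow> ic2 \<Rightarrow> ic2" where "IIff p q = IAnd (IImp p q) (IImp q p)"

lemma IAll_sat:
  assumes "finite (verts G)"
  shows "ic2_sat G a (IAll z \<phi>) \<longleftrightarrow> (\<forall>w\<in>verts G. ic2_sat G (a(z:=w)) \<phi>)"
proof -
  have f: "finite {w \<in> verts G. \<not> ic2_sat G (a(z := w)) \<phi>}" using assms by simp
  have "(\<not> 1 \<le> card {w \<in> verts G. \<not> ic2_sat G (a(z := w)) \<phi>}) \<longleftrightarrow> {w \<in> verts G. \<not> ic2_sat G (a(z := w)) \<phi>} = {}"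
    using f by (simp add: card_gt_0_iff[symmetric] Suc_le_eq)
  then show ?thesis by (auto simp: IAll_def)
qed
lemma IImp_sat[simp]: "ic2_sat G a (IImp p q) \<longleftrightarrow> (ic2_sat G a p \<longrightarrow> ic2_sat G a q)"
  by (simp add: IImp_def)
lemma IIff_sat[simp]: "ic2_sat G a (IIff p q) \<longleftrightarrow> (ic2_sat G a p \<longleftrightarrow> ic2_sat G a q)"
  by (auto simp add: IIff_def)
lemma IAll_fv[simp]: "ic2_fv (IAll i \<phi>) = ic2_fv \<phi> - {i}" by (simp add: IAll_def)
lemma IImp_fv[simp]: "ic2_fv (IImp p q) = ic2_fv p \<union> ic2_fv q" by (simp add: IImp_def)
lemma IIff_fv[simp]: "ic2_fv (IIff p q) = ic2_fv p \<union> ic2_fv q" by (auto simp add: IIff_def)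

definition psik :: "nat \<Rightarrow> ic2" where
  "psik k = IAll VY (IImp (INeg (IEq VX VY)) (IIff (IEdge VX VY) (IExc k VX (IEdge VY VX))))"

definition PsiP :: ic2 where
  "PsiP = IAll VX (IAnd (IAll VY (IImp (IEdge VX VY) (IEdge VY VX))) (IBigOr psik))"

lemma PsiP_fv: "ic2_fv PsiP = {}"
  by (auto simp: PsiP_def psik_def)

definition deg :: "graph \<Rightarrow> nat \<Rightarrow> nat" where
  "deg G y = card {w\<in>verts G. (y,w) \<in> arcs G}"

lemma PsiP_sat:
  assumes "finite (verts G)"
  shows "ic2_sat G a PsiP \<longleftrightarrow> (\<forall>x\<in>verts G. (\<forall>y\<in>verts G. (x,y) \<in> arcs G \<longrightarrow> (y,x) \<in> arcs G)
     \<and> (\<exists>k. \<forall>y\<in>verts G. x \<noteq> y \<longrightarrow> ((x,y) \<in> arcs G \<longleftrightarrow> k \<le> deg G y)))"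
  by (simp add: PsiP_def psik_def IAll_sat[OF assms] deg_def)

lemma deg_le: "finite (verts G) \<Longrightarrow> deg G y \<le> card (verts G)"
  unfolding deg_def by (rule card_mono) auto

lemma psi_to_PP:
  assumes g: "is_graph d G"
    and H: "\<forall>x\<in>verts G. (\<forall>y\<in>verts G. (x,y) \<in> arcs G \<longrightarrow> (y,x) \<in> arcs G)
     \<and> (\<exists>k. \<forall>y\<in>verts G. x \<noteq> y \<longrightarrow> ((x,y) \<in> arcs G \<longleftrightarrow> k \<le> deg G y))"
  shows "PP G v"
proof -
  have sub: "arcs G \<subseteq> verts G \<times> verts G" and nl: "\<forall>v. (v,v) \<notin> arcs G"
    using g by (auto simp: is_graph_def)
  have sy: "sym (arcs G)" using H sub unfolding sym_def by blast
  have "nA G u w \<or> nA G w u" if u: "u \<in> verts G" and w: "w \<in> verts G" for u w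
  proof -
    obtain ku where ku: "\<forall>y\<in>verts G. u \<noteq> y \<longrightarrow> ((u,y) \<in> arcs G \<longleftrightarrow> ku \<le> deg G y)" using H u by blast
    obtain kw where kw: "\<forall>y\<in>verts G. w \<noteq> y \<longrightarrow> ((w,y) \<in> arcs G \<longleftrightarrow> kw \<le> deg G y)" using H w by blast
    show ?thesis
    proof (cases "kw \<le> ku")
      case True
      have "nA G u w" unfolding nA_def
      proof (intro ballI impI)
        fix t assume t: "t \<in> verts G" "(u,t) \<in> arcs G \<and> t \<noteq> w"
        then have "u \<noteq> t" using nl by auto
        then have "ku \<le> deg G t" using ku t by blast
        then show "(w,t) \<in> arcs G" using kw t True by auto
      qed
      then show ?thesis by blast
    next
      case False
      have "nA G w u" unfolding nA_def
      proof (intro ballI impI)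
        fix t assume t: "t \<in> verts G" "(w,t) \<in> arcs G \<and> t \<noteq> u"
        then have "w \<noteq> t" using nl by auto
        then have "kw \<le> deg G t" using kw t by blast
        then show "(u,t) \<in> arcs G" using ku t False by auto
      qed
      then show ?thesis by blast
    qed
  qed
  then show ?thesis using sy by (simp add: PP_def)
qed

lemma PP_to_psi:
  assumes g: "is_graph d G" and P: "PP G v" and x: "x \<in> verts G"
  shows "\<exists>k. \<forall>y\<in>verts G. x \<noteq> y \<longrightarrow> ((x,y) \<in> arcs G \<longleftrightarrow> k \<le> deg G y)"
proof -
  have sub: "arcs G \<subseteq> verts G \<times> verts G" and nl: "\<forall>v. (v,v) \<notin> arcs G"
    and fin: "finite (verts G)"
    using g by (auto simp: is_graph_def)
  have sy: "\<And>a b. (a,b) \<in> arcs G \<Longrightarrow> (b,a) \<in> arcs G" using P by (auto simp: PP_def sym_def)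
  have nest: "\<And>u w. u \<in> verts G \<Longrightarrow> w \<in> verts G \<Longrightarrow> nA G u w \<or> nA G w u" using P by (auto simp: PP_def)
  define N where "N = {y\<in>verts G. (x,y) \<in> arcs G}"
  have finN: "finite N" using fin by (simp add: N_def)
  define k where "k = (if N = {} then Suc (card (verts G)) else Min (deg G ` N))"
  show ?thesis
  proof (intro exI ballI impI)
    fix y assume y: "y \<in> verts G" and xy: "x \<noteq> y"
    show "(x,y) \<in> arcs G \<longleftrightarrow> k \<le> deg G y"
    proof
      assume a: "(x,y) \<in> arcs G"
      then have "y \<in> N" using y by (simp add: N_def)
      then show "k \<le> deg G y" using finN by (auto simp: k_def)
    next
      assume kd: "k \<le> deg G y"
      show "(x,y) \<in> arcs G"
      proof (rule ccontr)
        assume nxy: "(x,y) \<notin> arcs G"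
        have Nne: "N \<noteq> {}"
        proof
          assume "N = {}"
          then have "k = Suc (card (verts G))" by (simp add: k_def)
          then show False using kd deg_le[OF fin, of y] by simp
        qed
        then have "k \<in> deg G ` N" unfolding k_def using finN by simp
        then obtain y0 where y0N: "y0 \<in> N" and ky0: "k = deg G y0" by auto
        have y0: "y0 \<in> verts G" "(x,y0) \<in> arcs G" using y0N by (auto simp: N_def)
        have yy0: "y \<noteq> y0" using nxy y0 by auto
        have nyx: "(y,x) \<notin> arcs G" using nxy sy by blast
        have "nA G y0 y \<or> nA G y y0" using nest[OF y0(1) y] .
        moreover have "\<not> nA G y0 y"
        proof
          assume "nA G y0 y"
          then have "(y,x) \<in> arcs G" using sy[OF y0(2)] x xy unfolding nA_def by blast
          then show False using nyx by simp
        qed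
        ultimately have nyy0: "nA G y y0" by simp
        define B where "B = {w\<in>verts G. (y0,w) \<in> arcs G}"
        define Ny where "Ny = {w\<in>verts G. (y,w) \<in> arcs G}"
        have finB: "finite B" using fin by (simp add: B_def)
        have xB: "x \<in> B" using sy[OF y0(2)] x by (simp add: B_def)
        have "card Ny < card B"
        proof (cases "(y,y0) \<in> arcs G")
          case True
          have yB: "y \<in> B" using sy[OF True] y by (simp add: B_def)
          have "Ny \<subseteq> insert y0 (B - {x, y})"
          proof
            fix t assume t: "t \<in> Ny"
            show "t \<in> insert y0 (B - {x, y})"
            proof (cases "t = y0")
              case False
              then have "(y0,t) \<in> arcs G" using nyy0 t unfolding nA_def Ny_def by blast
              moreover have "t \<noteq> x" using t nyx by (auto simp: Ny_def)
              moreover have "t \<noteq> y" using t nl by (auto simp: Ny_def)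
              ultimately show ?thesis using t by (auto simp: B_def Ny_def)
            qed simp
          qed
          then have "card Ny \<le> card (insert y0 (B - {x, y}))"
            using finB by (intro card_mono) auto
          also have "\<dots> \<le> Suc (card (B - {x, y}))" using finB by (simp add: card_insert_if)
          also have "card (B - {x, y}) = card B - 2" using xB yB xy finB by (simp add: card_Diff_subset)
          also have "card B \<ge> 2"
          proof -
            have "{x,y} \<subseteq> B" using xB yB by simp
            then have "card {x,y} \<le> card B" using finB by (intro card_mono)
            then show ?thesis using xy by simp
          qed
          ultimately show ?thesis by linarith
        next
          case False
          have "Ny \<subseteq> B - {x}"
          proof
            fix t assume t: "t \<in> Ny"
            have "t \<noteq> y0" using t False by (auto simp: Ny_def)
            then have "(y0,t) \<in> arcs G" using nyy0 t unfolding nA_def Ny_def by blast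
            moreover have "t \<noteq> x" using t nyx by (auto simp: Ny_def)
            ultimately show "t \<in> B - {x}" using t by (auto simp: B_def Ny_def)
          qed
          then have "card Ny \<le> card (B - {x})" using finB by (intro card_mono) auto
          also have "\<dots> < card B" by (rule card_Diff1_less[OF finB xB])
          finally show ?thesis .
        qed
        then have "deg G y < deg G y0" by (simp add: deg_def B_def Ny_def)
        then show False using kd ky0 by simp
      qed
    qed
  qed
qed

lemma PsiP_correct:
  assumes g: "is_graph d G"
  shows "ic2_sat G a PsiP \<longleftrightarrow> PP G v"
proof -
  have fin: "finite (verts G)" using g by (simp add: is_graph_def)
  show ?thesis
  proof
    assume "ic2_sat G a PsiP"
    then show "PP G v" using psi_to_PP[OF g] PsiP_sat[OF fin] by blast
  next
    assume P: "PP G v"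
    have "\<forall>x\<in>verts G. \<forall>y\<in>verts G. (x,y) \<in> arcs G \<longrightarrow> (y,x) \<in> arcs G"
      using P by (auto simp: PP_def sym_def)
    then show "ic2_sat G a PsiP" using PP_to_psi[OF g P] PsiP_sat[OF fin] by blast
  qed
qed

definition LL :: "nat \<Rightarrow> nat" where "LL R = 4*R + 8"
definition Y0 :: "nat \<Rightarrow> nat" where "Y0 R = 2*R + 2"
definition pos_rule :: "nat \<Rightarrow> nat \<Rightarrow> bool" where
  "pos_rule p q \<longleftrightarrow> (even p \<and> even q) \<or> (odd p \<and> even q \<and> q < p) \<or> (even p \<and> odd q \<and> p < q)"
definition badj :: "nat \<Rightarrow> bool \<Rightarrow> nat \<Rightarrow> nat \<Rightarrow> bool" where
  "badj R rm p q \<longleftrightarrow> pos_rule p q \<and> \<not> (rm \<and> ((p = Y0 R \<and> q = Y0 R + 3) \<or> (q = Y0 R \<and> p = Y0 R + 3)))"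
definition cls :: "nat \<Rightarrow> nat \<Rightarrow> nat \<Rightarrow> nat \<times> nat" where
  "cls R r p = (min p (2*r), min (LL R - 1 - p) (2*r))"

lemma badj_nz: "\<not> ((p = Y0 R \<and> q = Y0 R + 3) \<or> (q = Y0 R \<and> p = Y0 R + 3)) \<Longrightarrow> badj R rm p q = pos_rule p q"
  by (simp add: badj_def)

lemma blk:
  assumes x: "x < LL R" and x': "x' < LL R" and par: "even x \<longleftrightarrow> even x'"
    and cl: "cls R (Suc r) x = cls R (Suc r) x'" and y: "y < LL R" and yx: "y \<noteq> x" and rR: "Suc r \<le> R"
  shows "\<exists>y'<LL R. (even y' \<longleftrightarrow> even y) \<and> cls R r y' = cls R r y \<and> y' \<noteq> x' \<and> (badj R rm2 y' x' \<longleftrightarrow> badj R rm1 y x)"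
proof -
  have L: "LL R = 4*R + 8" by (simp add: LL_def)
  have Y: "Y0 R = 2*R + 2" by (simp add: Y0_def)
  have m1: "min x (2*Suc r) = min x' (2*Suc r)" and m2: "min (LL R - 1 - x) (2*Suc r) = min (LL R - 1 - x') (2*Suc r)"
    using cl by (simp_all add: cls_def)
  show ?thesis
  proof (cases "x < 2*r+2 \<or> LL R - 1 - x < 2*r+2")
    case True
    have xx: "x' = x"
    proof (cases "x < 2*r+2")
      case True
      then have "min x' (2*Suc r) = x" using m1 by simp
      then show ?thesis using True by (simp add: min_def split: if_split_asm)
    next
      case False
      then have c: "LL R - 1 - x < 2*r+2" using \<open>x < 2*r+2 \<or> LL R - 1 - x < 2*r+2\<close> by simp
      then have "min (LL R - 1 - x') (2*Suc r) = LL R - 1 - x" using m2 by simp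
      then have "LL R - 1 - x' = LL R - 1 - x" using c by (simp add: min_def split: if_split_asm)
      then show ?thesis using x x' by simp
    qed
    have nz: "\<not> ((y = Y0 R \<and> x = Y0 R + 3) \<or> (x = Y0 R \<and> y = Y0 R + 3))" using True rR L Y by auto
    show ?thesis using nz y xx yx by (intro exI[of _ y]) (simp add: badj_nz)
  next
    case False
    then have xm: "2*r+2 \<le> x" "2*r+2 \<le> LL R - 1 - x" by auto
    have "min x' (2*Suc r) = 2*Suc r" using m1 xm(1) by simp
    moreover have "min (LL R - 1 - x') (2*Suc r) = 2*Suc r" using m2 xm(2) by simp
    ultimately have xm': "2*r+2 \<le> x'" "2*r+2 \<le> LL R - 1 - x'" by (simp_all add: min_def split: if_split_asm)
    show ?thesis
    proof (cases "y < 2*r \<or> LL R - 1 - y < 2*r")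
      case True
      have nz: "\<not> ((y = Y0 R \<and> x = Y0 R + 3) \<or> (x = Y0 R \<and> y = Y0 R + 3))" 
        using True rR L Y y by auto
      have nz': "\<not> ((y = Y0 R \<and> x' = Y0 R + 3) \<or> (x' = Y0 R \<and> y = Y0 R + 3))" 
        using True rR L Y y by auto
      have o1: "(y < x) = (y < x')" "(x < y) = (x' < y)" using True xm xm' y x x' by linarith+
      have "pos_rule y x' = pos_rule y x" using par o1 unfolding pos_rule_def by auto
      moreover have "y \<noteq> x'" using True xm' y x' by auto
      ultimately show ?thesis using y nz nz' by (intro exI[of _ y]) (simp add: badj_nz)
    next
      case False
      then have ym: "2*r \<le> y" "2*r \<le> LL R - 1 - y" by auto
      define need where "need = badj R rm1 y x"
      define lo where "lo = 2*r + (if even y then 0 else 1)"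
      define hi where "hi = LL R - 1 - 2*r - (if even y then 1 else 0)"
      define y' where "y' = (if even y = even x then lo else if (even y \<longleftrightarrow> need) then lo else hi)"
      have lo_ok: "lo < LL R" "even lo \<longleftrightarrow> even y" "cls R r lo = cls R r y" "lo \<noteq> x'" "lo < x'"
        "\<not> ((lo = Y0 R \<and> x' = Y0 R + 3) \<or> (x' = Y0 R \<and> lo = Y0 R + 3))"
        using ym xm' rR L Y y x' unfolding lo_def cls_def by (auto simp: min_def)
      have hi_ok: "hi < LL R" "even hi \<longleftrightarrow> even y" "cls R r hi = cls R r y" "hi \<noteq> x'" "x' < hi"
        "\<not> ((hi = Y0 R \<and> x' = Y0 R + 3) \<or> (x' = Y0 R \<and> hi = Y0 R + 3))"
        using ym xm' rR L Y y x' unfolding hi_def cls_def by (auto simp: min_def)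
      have need_same: "need = even y" if ee: "even y = even x"
      proof -
        have "\<not> ((y = Y0 R \<and> x = Y0 R + 3) \<or> (x = Y0 R \<and> y = Y0 R + 3))"
          using ee by (auto simp: Y0_def)
        then have "need = pos_rule y x" unfolding need_def by (rule badj_nz)
        then show ?thesis using ee yx unfolding pos_rule_def by auto
      qed
      have "badj R rm2 y' x' \<longleftrightarrow> need"
      proof (cases "even y = even x")
        case True
        then show ?thesis using need_same lo_ok par unfolding y'_def by (simp add: badj_nz pos_rule_def)
      next
        case False
        then show ?thesis using lo_ok hi_ok par unfolding y'_def
          by (cases "even y"; cases need) (simp_all add: badj_nz pos_rule_def)
      qed
      moreover have "y' < LL R" "even y' \<longleftrightarrow> even y" "cls R r y' = cls R r y" "y' \<noteq> x'"
        using lo_ok hi_ok unfolding y'_def by auto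
      ultimately show ?thesis unfolding need_def by blast
    qed
  qed
qed

definition vadj :: "nat \<Rightarrow> bool \<Rightarrow> nat \<Rightarrow> nat \<Rightarrow> bool" where
  "vadj R rm u w \<longleftrightarrow> u \<noteq> w \<and> (if u mod LL R = w mod LL R then even (u mod LL R) else badj R rm (u mod LL R) (w mod LL R))"

definition gg :: "nat \<Rightarrow> nat \<Rightarrow> nat \<Rightarrow> bool \<Rightarrow> graph" where
  "gg d R N rm = \<lparr>verts = {..<LL R * N}, arcs = {(u,w). u < LL R * N \<and> w < LL R * N \<and> vadj R rm u w},
      lab = (\<lambda>_. replicate d False)\<rparr>"

definition pcompat :: "nat \<Rightarrow> nat \<Rightarrow> nat \<Rightarrow> nat \<Rightarrow> nat \<Rightarrow> bool" where
  "pcompat R N r u u' \<longleftrightarrow> u < LL R * N \<and> u' < LL R * N \<and> (even (u mod LL R) \<longleftrightarrow> even (u' mod LL R))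
     \<and> cls R r (u mod LL R) = cls R r (u' mod LL R)"

definition RelP :: "nat \<Rightarrow> nat \<Rightarrow> bool \<Rightarrow> bool \<Rightarrow> nat \<Rightarrow> nat \<Rightarrow> nat \<Rightarrow> nat \<Rightarrow> nat \<Rightarrow> bool" where
  "RelP R N rm1 rm2 r u1 u2 v1 v2 \<longleftrightarrow> pcompat R N r u1 v1 \<and> pcompat R N r u2 v2 \<and> (u1 = u2 \<longleftrightarrow> v1 = v2)
     \<and> (u1 mod LL R = u2 mod LL R \<longleftrightarrow> v1 mod LL R = v2 mod LL R) \<and> (vadj R rm1 u1 u2 \<longleftrightarrow> vadj R rm2 v1 v2)"

lemma LL_pos: "0 < LL R" by (simp add: LL_def)

lemma pos_rule_sym: "pos_rule p q = pos_rule q p" by (auto simp: pos_rule_def)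
lemma badj_sym: "badj R rm p q = badj R rm q p" by (auto simp: badj_def pos_rule_sym)
lemma vadj_sym: "vadj R rm u w = vadj R rm w u" by (auto simp: vadj_def badj_sym)
lemma vadj_irrefl[simp]: "\<not> vadj R rm u u" by (simp add: vadj_def)

lemma pcompat_sym: "pcompat R N r u u' = pcompat R N r u' u" by (auto simp: pcompat_def)

lemma cls_mono: "cls R (Suc r) p = cls R (Suc r) p' \<Longrightarrow> cls R r p = cls R r p'"
  by (simp add: cls_def min_def split: if_splits)

lemma pcompat_mono: "pcompat R N (Suc r) u u' \<Longrightarrow> pcompat R N r u u'"
  by (auto simp: pcompat_def intro: cls_mono)

lemma RelP_swap: "RelP R N rm1 rm2 r u1 u2 v1 v2 = RelP R N rm2 rm1 r v1 v2 u1 u2"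
  by (auto simp: RelP_def pcompat_sym)

lemma RelP_flip: "RelP R N rm1 rm2 r u1 u2 v1 v2 = RelP R N rm1 rm2 r u2 u1 v2 v1"
  by (auto simp: RelP_def vadj_sym)

lemma forth:
  assumes c: "pcompat R N (Suc r) u u'" and w: "w < LL R * N" and rR: "Suc r \<le> R" and N: "2 \<le> N"
  shows "\<exists>w'. RelP R N rm1 rm2 r w u w' u'"
proof -
  let ?L = "LL R"
  have Lp: "0 < ?L" by (rule LL_pos)
  have cu: "pcompat R N r u u'" using pcompat_mono[OF c] .
  have x: "u mod ?L < ?L" "u' mod ?L < ?L" using Lp by simp_all
  have par: "even (u mod ?L) \<longleftrightarrow> even (u' mod ?L)" and cl: "cls R (Suc r) (u mod ?L) = cls R (Suc r) (u' mod ?L)"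
    and ub: "u < ?L * N" "u' < ?L * N" using c by (auto simp: pcompat_def)
  show ?thesis
  proof (cases "w = u")
    case True
    then show ?thesis using cu by (intro exI[of _ u']) (simp add: RelP_def)
  next
    case wu: False
    show ?thesis
    proof (cases "w mod ?L = u mod ?L")
      case True
      define w' where "w' = (if u' < ?L then u' + ?L else u' mod ?L)"
      have w'b: "w' < ?L * N"
      proof (cases "u' < ?L")
        case True
        have "?L * 2 \<le> ?L * N" using N by simp
        moreover have "u' + ?L < ?L * 2" using True by simp
        moreover have "w' = u' + ?L" using True by (simp add: w'_def)
        ultimately show ?thesis by linarith
      next
        case False
        have "?L * 1 \<le> ?L * N" using N by simp
        moreover have "w' = u' mod ?L" using False by (simp add: w'_def)
        ultimately show ?thesis using x by linarith
      qed
      have w'm: "w' mod ?L = u' mod ?L" by (simp add: w'_def)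
      have w'u: "w' \<noteq> u'" using x by (auto simp: w'_def)
      have "pcompat R N r w w'" using cu w w'b True w'm by (simp add: pcompat_def)
      moreover have "vadj R rm1 w u \<longleftrightarrow> vadj R rm2 w' u'"
        using True w'm wu w'u par by (simp add: vadj_def)
      ultimately show ?thesis using cu True w'm wu w'u by (intro exI[of _ w']) (simp add: RelP_def)
    next
      case False
      obtain y' where y': "y' < ?L" "even y' \<longleftrightarrow> even (w mod ?L)" "cls R r y' = cls R r (w mod ?L)"
        "y' \<noteq> u' mod ?L" "badj R rm2 y' (u' mod ?L) \<longleftrightarrow> badj R rm1 (w mod ?L) (u mod ?L)"
        using blk[OF x par cl _ False rR, of rm2 rm1] Lp by auto
      have ym: "y' mod ?L = y'" using y' by simp
      have "?L * 1 \<le> ?L * N" using N by simp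
      then have yb: "y' < ?L * N" using y'(1) by linarith
      have "pcompat R N r w y'" using w yb ym y' by (simp add: pcompat_def)
      moreover have yu: "y' \<noteq> u'" using y'(4) ym by auto
      moreover have "vadj R rm1 w u \<longleftrightarrow> vadj R rm2 y' u'"
        using False wu y' ym yu by (simp add: vadj_def)
      ultimately show ?thesis using cu False wu y' ym by (intro exI[of _ y']) (simp add: RelP_def)
    qed
  qed
qed

lemma RelP_block1:
  assumes "RelP R N rm1 rm2 r w u w' u'" "w2 < LL R * N" "w2 mod LL R = w mod LL R" "w2 \<noteq> u" "w \<noteq> u"
  shows "RelP R N rm1 rm2 r w2 u w' u'"
  using assms by (auto simp: RelP_def pcompat_def vadj_def)

lemma RelP_block2:
  assumes "RelP R N rm1 rm2 r w u w' u'" "w2 < LL R * N" "w2 mod LL R = w' mod LL R" "w2 \<noteq> u'" "w' \<noteq> u'"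
  shows "RelP R N rm1 rm2 r w u w2 u'"
proof -
  have a: "RelP R N rm2 rm1 r w' u' w u" using assms(1) by (rule RelP_swap[THEN iffD1])
  have "RelP R N rm2 rm1 r w2 u' w u" by (rule RelP_block1[OF a assms(2,3,4,5)])
  then show ?thesis by (rule RelP_swap[THEN iffD1])
qed

lemma card_block:
  assumes "p < L"
  shows "card {w. w < L * N \<and> w mod L = p} = N"
proof -
  have L: "0 < L" using assms by simp
  have eq: "{w. w < L * N \<and> w mod L = p} = (\<lambda>i. p + L * i) ` {..<N}"
  proof
    show "{w. w < L * N \<and> w mod L = p} \<subseteq> (\<lambda>i. p + L * i) ` {..<N}"
    proof
      fix w assume w: "w \<in> {w. w < L * N \<and> w mod L = p}"
      have wl: "w < L * N" "w mod L = p" using w by auto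
      have "w = w mod L + L * (w div L)" by (rule mod_mult_div_eq[symmetric])
      then have "w = p + L * (w div L)" using wl(2) by simp
      moreover have "w < N * L" using wl(1) by (simp add: mult.commute)
      then have "w div L < N" by (rule less_mult_imp_div_less)
      ultimately show "w \<in> (\<lambda>i. p + L * i) ` {..<N}" by (intro image_eqI[of _ _ "w div L"]) auto
    qed
  next
    show "(\<lambda>i. p + L * i) ` {..<N} \<subseteq> {w. w < L * N \<and> w mod L = p}"
    proof
      fix w assume "w \<in> (\<lambda>i. p + L * i) ` {..<N}"
      then obtain i where i: "i < N" "w = p + L * i" by blast
      have "p + L * i < L + L * i" using assms by simp
      also have "L + L * i = L * Suc i" by simp
      also have "\<dots> \<le> L * N" using i by (intro mult_le_mono2) simp
      finally have "w < L * N" using i by simp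
      moreover have "w mod L = p" using i assms by simp
      ultimately show "w \<in> {w. w < L * N \<and> w mod L = p}" by simp
    qed
  qed
  have "inj_on (\<lambda>i. p + L * i) {..<N}" using L by (auto simp: inj_on_def)
  then show ?thesis unfolding eq by (simp add: card_image)
qed

lemma count_char:
  assumes L: "0 < L" and S: "S \<subseteq> {..<L*N}" and k: "k < N"
    and cl: "\<And>w w2. w \<in> S \<Longrightarrow> w \<noteq> u \<Longrightarrow> w2 < L*N \<Longrightarrow> w2 mod L = w mod L \<Longrightarrow> w2 \<noteq> u \<Longrightarrow> w2 \<in> S"
  shows "k \<le> card S \<longleftrightarrow> (k = 0 \<or> (k = 1 \<and> S \<noteq> {}) \<or> (\<exists>w\<in>S. w \<noteq> u))"
proof -
  have fin: "finite S" using S finite_subset by blast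
  show ?thesis
  proof
    assume kc: "k \<le> card S"
    show "k = 0 \<or> (k = 1 \<and> S \<noteq> {}) \<or> (\<exists>w\<in>S. w \<noteq> u)"
    proof (rule ccontr)
      assume c: "\<not> (k = 0 \<or> (k = 1 \<and> S \<noteq> {}) \<or> (\<exists>w\<in>S. w \<noteq> u))"
      then have "S \<subseteq> {u}" by blast
      then have "card S \<le> 1" using card_mono[of "{u}" S] by simp
      show False
      proof (cases "S = {}")
        case True
        then show False using kc c by simp
      next
        case False
        then have "k \<ge> 2" using c by auto
        then show False using kc \<open>card S \<le> 1\<close> by simp
      qed
    qed
  next
    assume "k = 0 \<or> (k = 1 \<and> S \<noteq> {}) \<or> (\<exists>w\<in>S. w \<noteq> u)"
    then consider "k = 0" | "k = 1" "S \<noteq> {}" | w where "w \<in> S" "w \<noteq> u" by blast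
    then show "k \<le> card S"
    proof cases
      case 2
      then show ?thesis using fin by (simp add: Suc_le_eq card_gt_0_iff)
    next
      case 3
      define T where "T = {w2. w2 < L * N \<and> w2 mod L = w mod L}"
      have cT: "card T = N" unfolding T_def by (rule card_block) (simp add: L)
      have finT: "finite T" by (simp add: T_def)
      have "T - {u} \<subseteq> S" using cl[OF 3] by (auto simp: T_def)
      then have "card (T - {u}) \<le> card S" using fin by (rule card_mono[rotated])
      moreover have "card T - 1 \<le> card (T - {u})" using finT by (cases "u \<in> T") (auto simp: card_Diff_singleton)
      ultimately show ?thesis using cT k by simp
    qed simp
  qed
qed

primrec c2_rank :: "c2 \<Rightarrow> nat" where
  "c2_rank (CEq z w) = 0"
| "c2_rank (CEdge z w) = 0"
| "c2_rank (CPred k z) = 0"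
| "c2_rank (CNeg \<phi>) = c2_rank \<phi>"
| "c2_rank (CAnd \<phi> \<psi>) = max (c2_rank \<phi>) (c2_rank \<psi>)"
| "c2_rank (CExc k z \<phi>) = Suc (c2_rank \<phi>)"

primrec c2_maxk :: "c2 \<Rightarrow> nat" where
  "c2_maxk (CEq z w) = 0"
| "c2_maxk (CEdge z w) = 0"
| "c2_maxk (CPred k z) = 0"
| "c2_maxk (CNeg \<phi>) = c2_maxk \<phi>"
| "c2_maxk (CAnd \<phi> \<psi>) = max (c2_maxk \<phi>) (c2_maxk \<psi>)"
| "c2_maxk (CExc k z \<phi>) = max k (c2_maxk \<phi>)"

lemma gg_verts[simp]: "verts (gg d R N rm) = {..<LL R * N}" by (simp add: gg_def)
lemma gg_arcs: "(u, w) \<in> arcs (gg d R N rm) \<longleftrightarrow> u < LL R * N \<and> w < LL R * N \<and> vadj R rm u w"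
  by (simp add: gg_def)
lemma gg_hasP[simp]: "\<not> hasP (gg d R N rm) k v" by (simp add: gg_def hasP_def)

lemma var2_other: "z = VX \<or> z = VY" by (cases z) auto

lemma RelP_upd:
  assumes "ov = (if z = VX then VY else VX)"
  shows "RelP R N rm1 rm2 r ((a(z:=w)) VX) ((a(z:=w)) VY) ((b(z:=w')) VX) ((b(z:=w')) VY)
     \<longleftrightarrow> RelP R N rm1 rm2 r w (a ov) w' (b ov)"
  using assms by (cases z) (simp_all add: RelP_flip[of R N rm1 rm2 r w])

lemma RelP_other:
  assumes "ov = (if z = VX then VY else VX)" "RelP R N rm1 rm2 r (a VX) (a VY) (b VX) (b VY)"
  shows "pcompat R N r (a ov) (b ov)"
  using assms by (cases z) (simp_all add: RelP_def)

lemma ef: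
  assumes N: "2 \<le> N"
  shows "RelP R N rm1 rm2 r (a VX) (a VY) (b VX) (b VY) \<Longrightarrow> c2_rank \<phi> \<le> r \<Longrightarrow> r \<le> R \<Longrightarrow> c2_maxk \<phi> < N
    \<Longrightarrow> c2_sat (gg d R N rm1) a \<phi> \<longleftrightarrow> c2_sat (gg d R N rm2) b \<phi>"
proof (induction \<phi> arbitrary: r a b)
  case (CEq z w)
  have fl: "(a VX = a VY) = (b VX = b VY)" using CEq.prems(1) unfolding RelP_def by blast
  have fl2: "(a VY = a VX) = (b VY = b VX)" using fl by metis
  show ?case by (cases z; cases w) (simp_all only: c2_sat.simps fl fl2 simp_thms)
next
  case (CEdge z w)
  have fl: "vadj R rm1 (a VX) (a VY) = vadj R rm2 (b VX) (b VY)" using CEdge.prems(1) unfolding RelP_def by blast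
  have fl2: "vadj R rm1 (a VY) (a VX) = vadj R rm2 (b VY) (b VX)" using fl vadj_sym by metis
  have bd: "a VX < LL R * N" "a VY < LL R * N" "b VX < LL R * N" "b VY < LL R * N"
    using CEdge.prems(1) unfolding RelP_def pcompat_def by blast+
  show ?case by (cases z; cases w) (simp_all add: gg_arcs fl fl2 bd)
next
  case (CPred k z)
  then show ?case by simp
next
  case (CNeg \<phi>)
  then show ?case by simp
next
  case (CAnd \<phi>1 \<phi>2)
  then show ?case by simp
next
  case (CExc k z \<psi>)
  obtain r' where r: "r = Suc r'" using CExc.prems(2) by (cases r) auto
  define ov where "ov = (if z = VX then VY else VX)"
  let ?G1 = "gg d R N rm1" and ?G2 = "gg d R N rm2" and ?L = "LL R"
  have co: "pcompat R N (Suc r') (a ov) (b ov)" using RelP_other[OF ov_def CExc.prems(1)] r by simp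
  have rR: "Suc r' \<le> R" using CExc.prems(3) r by simp
  have IH': "c2_sat ?G1 (a(z:=w)) \<psi> \<longleftrightarrow> c2_sat ?G2 (b(z:=w')) \<psi>" if "RelP R N rm1 rm2 r' w (a ov) w' (b ov)" for w w'
  proof -
    have "RelP R N rm1 rm2 r' ((a(z:=w)) VX) ((a(z:=w)) VY) ((b(z:=w')) VX) ((b(z:=w')) VY)"
      using that RelP_upd[OF ov_def] by blast
    moreover have "c2_rank \<psi> \<le> r'" "r' \<le> R" "c2_maxk \<psi> < N" using CExc.prems r by auto
    ultimately show ?thesis using CExc.IH by blast
  qed
  have fw: "\<exists>w'. RelP R N rm1 rm2 r' w (a ov) w' (b ov)" if "w < ?L * N" for w
    using forth[OF co that rR N] .
  have bw: "\<exists>w. RelP R N rm1 rm2 r' w (a ov) w' (b ov)" if wb': "w' < ?L * N" for w'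
  proof -
    have cc: "pcompat R N (Suc r') (b ov) (a ov)" using co pcompat_sym by blast
    obtain w where "RelP R N rm2 rm1 r' w' (b ov) w (a ov)" using forth[OF cc wb' rR N] by blast
    then show ?thesis using RelP_swap by blast
  qed
  have bnd: "w < ?L * N" "w' < ?L * N" if "RelP R N rm1 rm2 r' w u w' u'" for w u w' u'
    using that by (auto simp: RelP_def pcompat_def)
  have eqf: "w = u \<longleftrightarrow> w' = u'" if "RelP R N rm1 rm2 r' w u w' u'" for w u w' u'
    using that by (auto simp: RelP_def)
  define S1 where "S1 = {w \<in> verts ?G1. c2_sat ?G1 (a(z:=w)) \<psi>}"
  define S2 where "S2 = {w \<in> verts ?G2. c2_sat ?G2 (b(z:=w)) \<psi>}"
  have kN: "k < N" using CExc.prems(4) by simp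
  have Lp: "0 < ?L" by (rule LL_pos)
  have c1: "k \<le> card S1 \<longleftrightarrow> (k = 0 \<or> (k = 1 \<and> S1 \<noteq> {}) \<or> (\<exists>w\<in>S1. w \<noteq> a ov))"
  proof (rule count_char[OF Lp _ kN])
    show "S1 \<subseteq> {..<?L * N}" by (auto simp: S1_def)
  next
    fix w w2 assume w: "w \<in> S1" "w \<noteq> a ov" "w2 < ?L * N" "w2 mod ?L = w mod ?L" "w2 \<noteq> a ov"
    have wb: "w < ?L * N" using w by (simp add: S1_def)
    obtain w' where w': "RelP R N rm1 rm2 r' w (a ov) w' (b ov)" using fw[OF wb] by blast
    have w2': "RelP R N rm1 rm2 r' w2 (a ov) w' (b ov)" using RelP_block1[OF w' w(3,4,5,2)] .
    have "c2_sat ?G1 (a(z:=w2)) \<psi>" using IH'[OF w'] IH'[OF w2'] w(1) by (simp add: S1_def)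
    then show "w2 \<in> S1" using w(3) by (simp add: S1_def)
  qed
  have c2: "k \<le> card S2 \<longleftrightarrow> (k = 0 \<or> (k = 1 \<and> S2 \<noteq> {}) \<or> (\<exists>w\<in>S2. w \<noteq> b ov))"
  proof (rule count_char[OF Lp _ kN])
    show "S2 \<subseteq> {..<?L * N}" by (auto simp: S2_def)
  next
    fix w' w2 assume w: "w' \<in> S2" "w' \<noteq> b ov" "w2 < ?L * N" "w2 mod ?L = w' mod ?L" "w2 \<noteq> b ov"
    have wb: "w' < ?L * N" using w by (simp add: S2_def)
    obtain w0 where w0: "RelP R N rm1 rm2 r' w0 (a ov) w' (b ov)" using bw[OF wb] by blast
    have w2': "RelP R N rm1 rm2 r' w0 (a ov) w2 (b ov)" using RelP_block2[OF w0 w(3,4,5,2)] .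
    have "c2_sat ?G2 (b(z:=w2)) \<psi>" using IH'[OF w0] IH'[OF w2'] w(1) by (simp add: S2_def)
    then show "w2 \<in> S2" using w(3) by (simp add: S2_def)
  qed
  have e: "S1 \<noteq> {} \<longleftrightarrow> S2 \<noteq> {}"
  proof
    assume "S1 \<noteq> {}"
    then obtain w where w: "w \<in> S1" by blast
    then have wb: "w < ?L * N" by (simp add: S1_def)
    obtain w' where w': "RelP R N rm1 rm2 r' w (a ov) w' (b ov)" using fw[OF wb] by blast
    have "w' \<in> S2" using IH'[OF w'] w bnd[OF w'] by (simp add: S1_def S2_def)
    then show "S2 \<noteq> {}" by blast
  next
    assume "S2 \<noteq> {}"
    then obtain w' where w: "w' \<in> S2" by blast
    then have wb: "w' < ?L * N" by (simp add: S2_def)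
    obtain w where w': "RelP R N rm1 rm2 r' w (a ov) w' (b ov)" using bw[OF wb] by blast
    have "w \<in> S1" using IH'[OF w'] w bnd[OF w'] by (simp add: S1_def S2_def)
    then show "S1 \<noteq> {}" by blast
  qed
  have f: "(\<exists>w\<in>S1. w \<noteq> a ov) \<longleftrightarrow> (\<exists>w\<in>S2. w \<noteq> b ov)"
  proof
    assume "\<exists>w\<in>S1. w \<noteq> a ov"
    then obtain w where w: "w \<in> S1" "w \<noteq> a ov" by blast
    then have wb: "w < ?L * N" by (simp add: S1_def)
    obtain w' where w': "RelP R N rm1 rm2 r' w (a ov) w' (b ov)" using fw[OF wb] by blast
    have "w' \<in> S2" using IH'[OF w'] w bnd[OF w'] by (simp add: S1_def S2_def)
    moreover have "w' \<noteq> b ov" using eqf[OF w'] w(2) by simp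
    ultimately show "\<exists>w\<in>S2. w \<noteq> b ov" by blast
  next
    assume "\<exists>w\<in>S2. w \<noteq> b ov"
    then obtain w' where w: "w' \<in> S2" "w' \<noteq> b ov" by blast
    then have wb: "w' < ?L * N" by (simp add: S2_def)
    obtain w where w': "RelP R N rm1 rm2 r' w (a ov) w' (b ov)" using bw[OF wb] by blast
    have "w \<in> S1" using IH'[OF w'] w bnd[OF w'] by (simp add: S1_def S2_def)
    moreover have "w \<noteq> a ov" using eqf[OF w'] w(2) by simp
    ultimately show "\<exists>w\<in>S1. w \<noteq> a ov" by blast
  qed
  have "c2_sat ?G1 a (CExc k z \<psi>) \<longleftrightarrow> k \<le> card S1" by (simp add: S1_def)
  also have "\<dots> \<longleftrightarrow> k \<le> card S2" using c1 c2 e f by simp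
  also have "\<dots> \<longleftrightarrow> c2_sat ?G2 b (CExc k z \<psi>)" by (simp add: S2_def)
  finally show ?case .
qed

lemma gg_is_graph: "is_graph d (gg d R N rm)"
  by (auto simp: is_graph_def gg_def)

lemma gg_sym: "sym (arcs (gg d R N rm))"
  unfolding sym_def by (auto simp: gg_arcs vadj_sym)

lemma gg_ugraph: "is_ugraph d (gg d R N rm)"
  by (simp add: is_ugraph_def gg_is_graph gg_sym)

definition wt :: "nat \<Rightarrow> nat \<Rightarrow> int" where
  "wt L q = (if even q then int L - int q else int q - int L)"

lemma pos_rule_wt: "p < L \<Longrightarrow> q < L \<Longrightarrow> pos_rule p q \<longleftrightarrow> 0 < wt L p + wt L q"
  by (cases "even p"; cases "even q") (auto simp: pos_rule_def wt_def)

lemma vadj_wt: "vadj R False u w \<longleftrightarrow> u \<noteq> w \<and> 0 < wt (LL R) (u mod LL R) + wt (LL R) (w mod LL R)"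
proof -
  let ?L = "LL R"
  have p: "u mod ?L < ?L" "w mod ?L < ?L" using LL_pos by simp_all
  show ?thesis
  proof (cases "u mod ?L = w mod ?L")
    case True
    have "even (u mod ?L) \<longleftrightarrow> 0 < wt ?L (u mod ?L) + wt ?L (u mod ?L)"
      using p(1) by (auto simp: wt_def)
    then show ?thesis using True by (simp add: vadj_def)
  next
    case False
    then show ?thesis using pos_rule_wt[OF p] by (simp add: vadj_def badj_def)
  qed
qed

lemma PP_G: "PP (gg d R N False) v"
proof -
  let ?G = "gg d R N False" and ?w = "\<lambda>u. wt (LL R) (u mod LL R)"
  have "nA ?G u w" if "?w u \<le> ?w w" "w < LL R * N" for u w
    unfolding nA_def gg_arcs vadj_wt using that by auto
  then have "nA ?G u w \<or> nA ?G w u" if "u < LL R * N" "w < LL R * N" for u w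
    using that by (cases "?w u \<le> ?w w") auto
  then show ?thesis using gg_sym by (simp add: PP_def)
qed

lemma vadj_small: "p < LL R \<Longrightarrow> q < LL R \<Longrightarrow> vadj R rm p q \<longleftrightarrow> p \<noteq> q \<and> badj R rm p q"
  by (auto simp: vadj_def)

lemma not_PP_H:
  assumes N: "1 \<le> N"
  shows "\<not> PP (gg d R N True) v"
proof
  let ?G = "gg d R N True" and ?Y = "Y0 R"
  assume P: "PP ?G v"
  have LN: "LL R \<le> LL R * N" using N by simp
  have sm: "?Y < LL R" "?Y + 1 < LL R" "?Y + 2 < LL R" "?Y + 3 < LL R" by (simp_all add: Y0_def LL_def)
  have lt: "?Y < LL R * N" "?Y + 1 < LL R * N" "?Y + 2 < LL R * N" "?Y + 3 < LL R * N"
    using sm LN by linarith+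
  have inV: "?Y \<in> verts ?G" "?Y + 1 \<in> verts ?G" "?Y + 2 \<in> verts ?G" "?Y + 3 \<in> verts ?G"
    using lt by simp_all
  have b1: "badj R True (?Y + 1) ?Y" unfolding badj_def pos_rule_def Y0_def by presburger
  have b2: "\<not> badj R True (?Y + 3) ?Y" unfolding badj_def by simp
  have b3: "badj R True (?Y + 3) (?Y + 2)" unfolding badj_def pos_rule_def Y0_def by presburger
  have b4: "\<not> badj R True (?Y + 1) (?Y + 2)" unfolding badj_def pos_rule_def Y0_def by presburger
  have a1: "(?Y + 1, ?Y) \<in> arcs ?G" using b1 sm lt by (simp add: gg_arcs vadj_small)
  have a2: "(?Y + 3, ?Y) \<notin> arcs ?G" using b2 sm lt by (simp add: gg_arcs vadj_small)
  have a3: "(?Y + 3, ?Y + 2) \<in> arcs ?G" using b3 sm lt by (simp add: gg_arcs vadj_small)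
  have a4: "(?Y + 1, ?Y + 2) \<notin> arcs ?G" using b4 sm lt by (simp add: gg_arcs vadj_small)
  have "\<not> nA ?G (?Y + 1) (?Y + 3)" unfolding nA_def using a1 a2 inV by force
  moreover have "\<not> nA ?G (?Y + 3) (?Y + 1)" unfolding nA_def using a3 a4 inV by force
  ultimately show False using P inV unfolding PP_def by blast
qed

lemma main_C:
  assumes CG: "\<And>G. C G \<Longrightarrow> is_graph d G" and Cgg: "\<And>R N rm. C (gg d R N rm)"
  shows "(\<forall>P. c2_expressible C P \<longrightarrow> fo_expressible C P \<and> ic2_expressible C P)
     \<and> (\<exists>P. fo_expressible C P \<and> ic2_expressible C P \<and> \<not> c2_expressible C P)"
proof (intro conjI allI impI exI[of _ PP])
  fix P assume "c2_expressible C P"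
  then obtain \<phi> where fv: "c2_fv \<phi> \<subseteq> {VX}"
    and sem: "\<forall>G v. C G \<and> v \<in> verts G \<longrightarrow> (c2_sat G (\<lambda>_. v) \<phi> \<longleftrightarrow> P G v)"
    unfolding c2_expressible_def by blast
  define \<rho> where "\<rho> = (\<lambda>z. if z = VX then (0::nat) else 1)"
  have \<rho>lt: "\<forall>z. \<rho> z < 2" by (simp add: \<rho>_def)
  have h: "\<rho> z = 0" if "z \<in> c2_fv \<phi>" for z
  proof -
    have "z = VX" using fv that by blast
    then show ?thesis by (simp add: \<rho>_def)
  qed
  have h2: "\<rho> ` c2_fv \<phi> \<subseteq> {0}" using h by (intro image_subsetI) simp
  have h3: "\<rho> ` c2_fv \<phi> \<union> {0} \<subseteq> {0}" using h2 by (rule Un_least) simp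
  have "fo_fv (tr \<rho> 2 \<phi>) \<subseteq> {0}" by (rule subset_trans[OF tr_fv h3])
  moreover have "\<forall>G v. C G \<and> v \<in> verts G \<longrightarrow> (fo_sat G (\<lambda>_. v) (tr \<rho> 2 \<phi>) \<longleftrightarrow> P G v)"
  proof (intro allI impI)
    fix G v assume Gv: "C G \<and> v \<in> verts G"
    have "is_graph d G" using CG Gv by blast
    then have fin: "finite (verts G)" by (simp add: is_graph_def)
    have "fo_sat G (\<lambda>_. v) (tr \<rho> 2 \<phi>) \<longleftrightarrow> c2_sat G ((\<lambda>_. v) \<circ> \<rho>) \<phi>" using tr_sat[OF fin \<rho>lt] .
    also have "(\<lambda>_. v) \<circ> \<rho> = (\<lambda>_. v)" by (simp add: comp_def)
    also have "c2_sat G (\<lambda>_. v) \<phi> \<longleftrightarrow> P G v" using sem Gv by blast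
    finally show "fo_sat G (\<lambda>_. v) (tr \<rho> 2 \<phi>) \<longleftrightarrow> P G v" .
  qed
  ultimately show "fo_expressible C P" unfolding fo_expressible_def by (intro exI[of _ "tr \<rho> 2 \<phi>"] conjI)
  have "ic2_fv (c2i \<phi>) \<subseteq> {VX}" using fv by (simp add: c2i_fv)
  moreover have "\<forall>G v. C G \<and> v \<in> verts G \<longrightarrow> (ic2_sat G (\<lambda>_. v) (c2i \<phi>) \<longleftrightarrow> P G v)"
    unfolding c2i_sat by (rule sem)
  ultimately show "ic2_expressible C P" unfolding ic2_expressible_def by (intro exI[of _ "c2i \<phi>"] conjI)
next
  have "\<forall>G v. C G \<and> v \<in> verts G \<longrightarrow> (fo_sat G (\<lambda>_. v) foP \<longleftrightarrow> PP G v)"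
  proof (intro allI impI)
    fix G v assume "C G \<and> v \<in> verts G"
    then have "is_graph d G" using CG by blast
    then show "fo_sat G (\<lambda>_. v) foP \<longleftrightarrow> PP G v" by (rule foP_correct)
  qed
  then show "fo_expressible C PP" unfolding fo_expressible_def
    by (intro exI[of _ foP] conjI) (simp_all add: foP_fv)
next
  have "\<forall>G v. C G \<and> v \<in> verts G \<longrightarrow> (ic2_sat G (\<lambda>_. v) PsiP \<longleftrightarrow> PP G v)"
  proof (intro allI impI)
    fix G v assume "C G \<and> v \<in> verts G"
    then have "is_graph d G" using CG by blast
    then show "ic2_sat G (\<lambda>_. v) PsiP \<longleftrightarrow> PP G v" by (rule PsiP_correct)
  qed
  then show "ic2_expressible C PP" unfolding ic2_expressible_def
    by (intro exI[of _ PsiP] conjI) (simp_all add: PsiP_fv)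
next
  show "\<not> c2_expressible C PP"
  proof
    assume "c2_expressible C PP"
    then obtain \<phi> where sem: "\<forall>G v. C G \<and> v \<in> verts G \<longrightarrow> (c2_sat G (\<lambda>_. v) \<phi> \<longleftrightarrow> PP G v)"
      unfolding c2_expressible_def by blast
    define R where "R = c2_rank \<phi>"
    define N where "N = c2_maxk \<phi> + 2"
    have N2: "2 \<le> N" by (simp add: N_def)
    have v0: "(0::nat) \<in> verts (gg d R N rm)" for rm
      using LL_pos[of R] N2 by simp
    have e1: "c2_sat (gg d R N False) (\<lambda>_. 0) \<phi> \<longleftrightarrow> PP (gg d R N False) 0"
      using sem Cgg v0 by blast
    have e2: "c2_sat (gg d R N True) (\<lambda>_. 0) \<phi> \<longleftrightarrow> PP (gg d R N True) 0"
      using sem Cgg v0 by blast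
    have s1: "c2_sat (gg d R N False) (\<lambda>_. 0) \<phi>" using e1 PP_G by blast
    have "\<not> PP (gg d R N True) 0" using not_PP_H N2 by simp
    then have s2: "\<not> c2_sat (gg d R N True) (\<lambda>_. 0) \<phi>" using e2 by blast
    have rel: "RelP R N False True R ((\<lambda>_. 0::nat) VX) ((\<lambda>_. 0::nat) VY) ((\<lambda>_. 0::nat) VX) ((\<lambda>_. 0::nat) VY)"
      using LL_pos[of R] N2 by (simp add: RelP_def pcompat_def)
    have "c2_sat (gg d R N False) (\<lambda>_. 0) \<phi> \<longleftrightarrow> c2_sat (gg d R N True) (\<lambda>_. 0) \<phi>"
      by (rule ef[OF N2 rel]) (simp_all add: R_def N_def)
    then show False using s1 s2 by simp
  qed
qed

theorem theorem7:
  fixes d :: nat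
  shows "\<forall>C \<in> {is_graph d, is_ugraph d}.
           (\<forall>P. c2_expressible C P \<longrightarrow> fo_expressible C P \<and> ic2_expressible C P)
         \<and> (\<exists>P. fo_expressible C P \<and> ic2_expressible C P \<and> \<not> c2_expressible C P)"
proof -
  have A: "(\<forall>P. c2_expressible (is_graph d) P \<longrightarrow> fo_expressible (is_graph d) P \<and> ic2_expressible (is_graph d) P)
         \<and> (\<exists>P. fo_expressible (is_graph d) P \<and> ic2_expressible (is_graph d) P \<and> \<not> c2_expressible (is_graph d) P)"
    by (rule main_C[of "is_graph d" d]) (simp_all add: gg_is_graph)
  have B: "(\<forall>P. c2_expressible (is_ugraph d) P \<longrightarrow> fo_expressible (is_ugraph d) P \<and> ic2_expressible (is_ugraph d) P)
         \<and> (\<exists>P. fo_expressible (is_ugraph d) P \<and> ic2_expressible (is_ugraph d) P \<and> \<not> c2_expressible (is_ugraph d) P)"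
    by (rule main_C[of "is_ugraph d" d]) (simp_all add: is_ugraph_def gg_is_graph gg_sym)
  show ?thesis using A B by blast
qed

end
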